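(* Let $\Bbbk$ be a field of characteristic $2$, $G=\langle\sigma\rangle$ cyclic of order $4$ acting on $V=V_3$ so that on the dual basis $\sigma x_1=x_1+x_2$, $\sigma x_2=x_2+x_3$, $\sigma x_3=x_3$, and let $H=\langle\sigma^2\rangle$. Let $A=\Bbbk[N^G(x_1),N^G_H(x_2),x_3]$ where $N^G(x_1)=\prod_{i=0}^3\sigma^i(x_1)$ and $N^G_H(x_2)=x_2\,\sigma(x_2)=x_2(x_2+x_3)$, and let $u=x_1^2x_3+x_1x_3^2+x_2^3+x_2^2x_3$. Then $\Bbbk[V]^G$ is a free $A$-module with basis $\{1,u\}$; in particular $r(\Bbbk[V]^G,A)=2$ and $s(\Bbbk[V]^G,A)=3$.
   Context: For graded $A$ with $A_0=\Bbbk$ and finitely generated graded $A$-module $M$, expand the Hilbert series quotient $H(M,t)/H(A,t)=a_0+a_1(t-1)+\cdots$ about $t=1$; $r(M,A)=a_0$ and $s(M,A)=a_1$. *)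

theory Defs
  imports "HOL-Analysis.Analysis" "HOL-Computational_Algebra.Polynomial"
begin

text \<open>The polynomial ring k[x1,x2,x3] is modelled as nested univariate polynomials
  ('k poly) poly) poly: the outermost variable is x1, the middle one x2, the innermost x3.\<close>

type_synonym 'k mpoly3 = "'k poly poly poly"

definition const3 :: "'k::comm_ring_1 \<Rightarrow> 'k mpoly3" where
  "const3 c = [:[:[:c:]:]:]"

definition X1 :: "'k::comm_ring_1 mpoly3" where "X1 = [:0, 1:]"
definition X2 :: "'k::comm_ring_1 mpoly3" where "X2 = [:[:0, 1:]:]"
definition X3 :: "'k::comm_ring_1 mpoly3" where "X3 = [:[:[:0, 1:]:]:]"

definition eval3 :: "'k::comm_ring_1 mpoly3 \<Rightarrow> 'k mpoly3 \<Rightarrow> 'k mpoly3 \<Rightarrow> 'k mpoly3 \<Rightarrow> 'k mpoly3" where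
  "eval3 p a b c =
     poly (map_poly (\<lambda>q. poly (map_poly (\<lambda>r. poly (map_poly const3 r) c) q) b) p) a"

definition sigma :: "'k::comm_ring_1 mpoly3 \<Rightarrow> 'k mpoly3" where
  "sigma p = eval3 p (X1 + X2) (X2 + X3) X3"

definition invariants :: "'k::comm_ring_1 mpoly3 set" where
  "invariants = {f. \<forall>n. (sigma ^^ n) f = f}"

definition NG_x1 :: "'k::comm_ring_1 mpoly3" where
  "NG_x1 = (\<Prod>i<4. (sigma ^^ i) X1)"

definition NGH_x2 :: "'k::comm_ring_1 mpoly3" where
  "NGH_x2 = X2 * sigma X2"

definition u_elem :: "'k::comm_ring_1 mpoly3" where
  "u_elem = X1^2 * X3 + X1 * X3^2 + X2^3 + X2^2 * X3"

definition gen_alg :: "'k::comm_ring_1 mpoly3 \<Rightarrow> 'k mpoly3 \<Rightarrow> 'k mpoly3 \<Rightarrow> 'k mpoly3 set" where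
  "gen_alg a b c = {eval3 P a b c | P. True}"

definition coeff3 :: "'k::zero mpoly3 \<Rightarrow> nat \<Rightarrow> nat \<Rightarrow> nat \<Rightarrow> 'k" where
  "coeff3 p i j k = coeff (coeff (coeff p i) j) k"

definition homogeneous :: "nat \<Rightarrow> 'k::zero mpoly3 \<Rightarrow> bool" where
  "homogeneous d p \<longleftrightarrow> (\<forall>i j k. coeff3 p i j k \<noteq> 0 \<longrightarrow> i + j + k = d)"

definition graded_part :: "'k::zero mpoly3 set \<Rightarrow> nat \<Rightarrow> 'k mpoly3 set" where
  "graded_part M d = {p \<in> M. homogeneous d p}"

definition scale3 :: "'k::comm_ring_1 \<Rightarrow> 'k mpoly3 \<Rightarrow> 'k mpoly3" where
  "scale3 c p = const3 c * p"

definition hilbert :: "'k::field mpoly3 set \<Rightarrow> real \<Rightarrow> real" where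
  "hilbert M t = (\<Sum>d. real (vector_space.dim scale3 (graded_part M d)) * t ^ d)"

text \<open>Expansion H(M,t)/H(A,t) = a0 + a1 (t-1) + ... about t = 1: a0 and a1.\<close>
definition r_inv :: "'k::field mpoly3 set \<Rightarrow> 'k mpoly3 set \<Rightarrow> real" where
  "r_inv M A = Lim (at_left 1) (\<lambda>t. hilbert M t / hilbert A t)"

definition s_inv :: "'k::field mpoly3 set \<Rightarrow> 'k mpoly3 set \<Rightarrow> real" where
  "s_inv M A = Lim (at_left 1) (\<lambda>t. (hilbert M t / hilbert A t - r_inv M A) / (t - 1))"

end

theory Submission
  imports Defs
begin

lemma char2_add_self:
  assumes "(2::'a::comm_ring_1) = 0" shows "x + x = (0::'a)"
  by (metis assms mult_2 mult_zero_left)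

lemma char2_poly:
  assumes "(2::'a::comm_ring_1) = 0" shows "(2::'a poly) = 0"
  using assms by (simp add: numeral_poly)

definition tau :: "'k::comm_ring_1 poly poly \<Rightarrow> 'k poly poly" where
  "tau q = pcompose q [:[:0,1:],1:]"

definition sig :: "'k::comm_ring_1 mpoly3 \<Rightarrow> 'k mpoly3" where
  "sig p = pcompose (map_poly tau p) [:[:0,1:],1:]"

lemma const3_0[simp]: "const3 0 = 0" by (simp add: const3_def)

lemma evalG: "poly (map_poly const3 r) X3 = [:[:r:]:]"
proof (induct r)
  case 0 then show ?case by simp
next
  case (pCons a r)
  then show ?case
    by (simp add: map_poly_pCons const3_def X3_def)
qed

lemma evalF: "poly (map_poly (\<lambda>r. [:[:r:]:]) q) (X2 + X3) = [:tau q:]"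
proof (induct q)
  case 0 then show ?case by (simp add: tau_def)
next
  case (pCons a q)
  then show ?case
    by (simp add: map_poly_pCons tau_def X2_def X3_def pcompose_pCons)
qed

lemma sigma_eq: "sigma p = sig p"
proof -
  have "sigma p = poly (map_poly (\<lambda>q. [:tau q:]) p) (X1 + X2)"
    unfolding sigma_def eval3_def by (simp add: evalG evalF)
  also have "\<dots> = sig p"
    unfolding sig_def
  proof (induct p)
    case 0 then show ?case by simp
  next
    case (pCons a p)
    then show ?case
      by (simp add: map_poly_pCons tau_def X1_def X2_def pcompose_pCons)
  qed
  finally show ?thesis .
qed


lemma map_poly_add_hom:
  assumes "f 0 = 0" "\<And>x y. f (x + y) = f x + f y"
  shows "map_poly f (p + q) = map_poly f p + map_poly f q"
  by (intro poly_eqI) (simp add: coeff_map_poly assms)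

lemma map_poly_mult_hom:
  fixes f :: "'a::comm_semiring_1 \<Rightarrow> 'b::comm_semiring_1"
  assumes f0: "f 0 = 0" and fa: "\<And>x y. f (x + y) = f x + f y" and fm: "\<And>x y. f (x * y) = f x * f y"
  shows "map_poly f (p * q) = map_poly f p * map_poly f q"
proof (induct p)
  case 0 then show ?case by simp
next
  case (pCons a p)
  have "map_poly f (pCons a p * q) = map_poly f (smult a q) + map_poly f (pCons 0 (p * q))"
    by (simp add: map_poly_add_hom f0 fa)
  also have "\<dots> = smult (f a) (map_poly f q) + pCons 0 (map_poly f p * map_poly f q)"
    by (simp add: map_poly_smult f0 fm map_poly_pCons pCons.hyps)
  also have "\<dots> = pCons (f a) (map_poly f p) * map_poly f q" by simp
  finally show ?case by (simp add: map_poly_pCons f0)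
qed

lemma tau_add[simp]: "tau (p + q) = tau p + tau q" by (simp add: tau_def pcompose_add)
lemma tau_mult[simp]: "tau (p * q) = tau p * tau q" by (simp add: tau_def pcompose_mult)
lemma tau_const[simp]: "tau [:c:] = [:c:]" by (simp add: tau_def)
lemma tau_0[simp]: "tau 0 = 0" by (simp add: tau_def)
lemma tau_1[simp]: "tau 1 = 1" by (simp add: tau_def pcompose_1)
lemma tau_diff[simp]: "tau (p - q) = tau p - tau q" by (simp add: tau_def pcompose_diff)
lemma tau_uminus[simp]: "tau (- p) = - tau p" by (simp add: tau_def pcompose_uminus)
lemma tau_x2: "tau [:0,1:] = [:[:0,1:],1:]" by (simp add: tau_def pcompose_pCons)
lemma tau_power[simp]: "tau (p ^ n) = tau p ^ n" by (induct n) simp_all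

lemma degree_tau[simp]: "degree (tau (q::'k::idom poly poly)) = degree q"
  by (simp add: tau_def degree_pcompose)

lemma lead_coeff_tau[simp]: "lead_coeff (tau (q::'k::idom poly poly)) = lead_coeff q"
  by (simp add: tau_def lead_coeff_comp)

lemma tau_eq_0_iff[simp]: "tau (q::'k::idom poly poly) = 0 \<longleftrightarrow> q = 0"
  by (simp add: tau_def pcompose_eq_0_iff)

lemma tau_tau:
  assumes "(2::'k::comm_ring_1) = 0" shows "tau (tau (q::'k poly poly)) = q"
proof -
  have a: "[:0,1:] + [:0,1:] = (0::'k poly)" using char2_add_self[OF char2_poly[OF assms]] .
  have "pcompose [:[:0,1:],1:] [:[:0,1:],1:] = ([:0,1:] :: 'k poly poly)"
    by (simp add: pcompose_pCons a assms)
  then show ?thesis unfolding tau_def by (simp add: pcompose_assoc[symmetric])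
qed

lemma sig_add[simp]: "sig (p + q) = sig p + sig q"
  by (simp add: sig_def map_poly_add_hom pcompose_add)
lemma sig_mult[simp]: "sig (p * q) = sig p * sig q"
  by (simp add: sig_def map_poly_mult_hom pcompose_mult)
lemma sig_const[simp]: "sig [:c:] = [:tau c:]" by (simp add: sig_def map_poly_pCons)
lemma sig_0[simp]: "sig 0 = 0" by (simp add: sig_def)
lemma sig_1[simp]: "sig 1 = 1" by (metis one_pCons sig_const tau_1)
lemma sig_diff[simp]: "sig (p - q) = sig p - sig q"
  by (metis add_diff_cancel sig_add diff_add_cancel)
lemma sig_power[simp]: "sig (p ^ n) = sig p ^ n" by (induct n) simp_all
lemma sig_X1: "sig [:0,1:] = [:[:0,1:],1:]"
  by (simp add: sig_def map_poly_pCons pcompose_pCons)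
lemma sig_pCons: "sig (pCons c p) = [:tau c:] + [:[:0,1:],1:] * sig p"
  by (simp add: sig_def map_poly_pCons pcompose_pCons)

lemma degree_sig[simp]: "degree (sig (p::'k::idom mpoly3)) = degree p"
  by (simp add: sig_def degree_pcompose degree_map_poly)

lemma lead_coeff_sig[simp]: "lead_coeff (sig (p::'k::idom mpoly3)) = tau (lead_coeff p)"
  by (simp add: sig_def lead_coeff_comp degree_map_poly coeff_map_poly)

section \<open>Division by monic polynomials\<close>

lemma monic_divide_ex:
  fixes f g :: "'a::comm_ring_1 poly"
  assumes "lead_coeff g = 1" "degree g > 0"
  shows "\<exists>q r. f = g * q + r \<and> degree r < degree g"
proof -
  obtain q r where qr: "pseudo_divmod f g = (q, r)" by (cases "pseudo_divmod f g") auto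
  have g0: "g \<noteq> 0" using assms by auto
  from pseudo_divmod(1)[OF g0 qr] assms have "f = g*q + r" by simp
  moreover from pseudo_divmod(2)[OF g0 qr] assms have "degree r < degree g" by auto
  ultimately show ?thesis by blast
qed

lemma monic_divide:
  fixes f g :: "'a::comm_ring_1 poly"
  assumes "lead_coeff g = 1" "degree g > 0"
  obtains q r where "f = g * q + r" "degree r < degree g"
proof -
  obtain q r where qr: "pseudo_divmod f g = (q, r)" by (cases "pseudo_divmod f g") auto
  have g0: "g \<noteq> 0" using assms by auto
  from pseudo_divmod(1)[OF g0 qr] assms have "f = g*q + r" by simp
  moreover from pseudo_divmod(2)[OF g0 qr] assms have "degree r < degree g" by auto
  ultimately show ?thesis using that by blast
qed

lemma monic_divide_unique:
  fixes g :: "'a::idom poly"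
  assumes "lead_coeff g = 1" "g*q + r = g*q' + r'" "degree r < degree g" "degree r' < degree g"
  shows "q = q' \<and> r = r'"
proof -
  have g0: "g \<noteq> 0" using assms by auto
  have eq: "g * (q - q') = r' - r" using assms(2) by (simp add: algebra_simps)
  have "q = q'"
  proof (rule ccontr)
    assume "q \<noteq> q'"
    then have "degree (g*(q-q')) = degree g + degree (q - q')" using degree_mult_eq g0 by (simp add: degree_mult_eq)
    moreover have "degree (r' - r) < degree g"
      using degree_diff_le_max[of r' r] assms(3,4) by linarith
    ultimately show False using eq by simp
  qed
  then show ?thesis using assms(2) by simp
qed


section \<open>Invariants of tau in k[x2,x3]\<close>

definition mm :: "'k::comm_ring_1 poly poly" where "mm = [:0, [:0,1:], 1:]"

lemma lead_coeff_mm[simp]: "lead_coeff (mm::'k::comm_ring_1 poly poly) = 1" by (simp add: mm_def)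
lemma coeff_mm2[simp]: "coeff (mm::'k::comm_ring_1 poly poly) 2 = 1" by (simp add: mm_def numeral_2_eq_2)
lemma mm_nz[simp]: "(mm::'k::comm_ring_1 poly poly) \<noteq> 0" by (simp add: mm_def)
lemma degree_mm[simp]: "degree (mm::'k::comm_ring_1 poly poly) = 2" by (simp add: mm_def)

lemma tau_mm:
  assumes "(2::'k::comm_ring_1) = 0" shows "tau (mm::'k poly poly) = mm"
proof -
  have a: "[:0,1:] + [:0,1:] = (0::'k poly)" using char2_add_self[OF char2_poly[OF assms]] .
  show ?thesis by (simp add: tau_def mm_def pcompose_pCons a assms)
qed

lemma tau_B:
  assumes "(2::'k::comm_ring_1) = 0" shows "tau (pcompose Q (mm::'k poly poly)) = pcompose Q mm"
  using tau_mm[OF assms] by (simp add: tau_def pcompose_assoc[symmetric])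

lemma degree_le1_form:
  assumes "degree (r::'a::zero poly) < 2" shows "r = [:coeff r 0, coeff r 1:]"
  using assms by (auto simp: poly_eq_iff coeff_pCons coeff_eq_0 split: nat.split)

lemma inv_R2:
  fixes q :: "'k::field poly poly"
  assumes two: "(2::'k) = 0" and "tau q = q"
  shows "\<exists>Q. q = pcompose Q mm"
  using assms(2)
proof (induct "degree q" arbitrary: q rule: less_induct)
  case less
  obtain s r where qsr: "q = mm * s + r" and dr: "degree r < degree (mm::'k poly poly)"
    using monic_divide_ex[OF lead_coeff_mm, of q] by auto
  have "mm * s + r = mm * tau s + tau r"
    using less.prems qsr by (metis tau_add tau_mult tau_mm[OF two])
  from monic_divide_unique[OF _ this] dr
  have st: "tau s = s" and rt: "tau r = r" by auto
  define c0 where "c0 = coeff r 0"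
  define c1 where "c1 = coeff r 1"
  have r: "r = [:c0, c1:]" using degree_le1_form dr c0_def c1_def by auto
  have "tau r = [:c0 + [:0,1:] * c1, c1:]" unfolding r by (simp add: tau_def pcompose_pCons)
  with rt r have "[:0,1:] * c1 = 0" by simp
  then have "c1 = 0" by simp
  then have r0: "r = [:c0:]" using r by simp
  show ?case
  proof (cases "s = 0")
    case True
    then show ?thesis using qsr r0 by (intro exI[of _ "[:c0:]"]) simp
  next
    case False
    have dms: "degree (mm * s) = 2 + degree s" using False by (simp add: degree_mult_eq)
    have "degree q = 2 + degree s"
      using qsr dr dms degree_add_eq_left[of r "mm * s"] by (simp add: add.commute)
    then obtain S where "s = pcompose S mm" using less.hyps[of s] st by auto
    then show ?thesis using qsr r0 by (intro exI[of _ "pCons c0 S"]) (simp add: pcompose_pCons)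
  qed
qed

lemma ring_aux1:
  fixes t :: "'a::comm_ring"
  shows "t = c + (A + X) * tq \<Longrightarrow> p = c + X * q \<Longrightarrow> tq - q = A * w \<Longrightarrow> t - p = A * (tq + X * w)"
  by (simp add: algebra_simps)

lemma tau_diff_dvd:
  fixes q :: "'k::comm_ring_1 poly poly"
  shows "\<exists>w. tau q - q = [:[:0,1:]:] * w"
proof (induct q)
  case 0 then show ?case by (intro exI[of _ 0]) simp
next
  case (pCons c q)
  then obtain w where w: "tau q - q = [:[:0,1:]:] * w" by blast
  have e0: "[:[:0,1:],1:] = [:[:0,1:]:] + ([:0,1:] :: 'k poly poly)" by simp
  have e1: "tau (pCons c q) = [:c:] + ([:[:0,1:]:] + [:0,1:]) * tau q"
    unfolding e0[symmetric] by (simp add: tau_def pcompose_pCons)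
  have e2: "pCons c q = [:c:] + [:0,1:] * q" by simp
  show ?case using ring_aux1[OF e1 e2 w] by blast
qed

lemma x3_dvd:
  fixes b w :: "'k::field poly poly"
  assumes "mm * b = [:[:0,1:]:] * w"
  shows "\<exists>b'. b = [:[:0,1:]:] * b'"
proof -
  have cf: "[:0,1:] dvd coeff b n" for n
  proof -
    have "coeff (mm * b) (Suc (Suc n)) = coeff b n + [:0,1:] * coeff b (Suc n)"
      by (simp add: mm_def)
    moreover have "coeff ([:[:0,1:]:] * w) (Suc (Suc n)) = [:0,1:] * coeff w (Suc (Suc n))"
      by simp
    ultimately have "coeff b n = [:0,1:] * (coeff w (Suc (Suc n)) - coeff b (Suc n))"
      using assms by (simp add: algebra_simps)
    then show ?thesis by (metis dvd_triv_left)
  qed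
  have cf': "[:0,1:] * (coeff b n div [:0,1:]) = coeff b n" for n
    using cf dvd_mult_div_cancel by blast
  have cm: "coeff (map_poly (\<lambda>c. c div [:0,1:]) b) n = coeff b n div [:0,1:]" for n
    by (rule coeff_map_poly) simp
  have "[:[:0,1:]:] * map_poly (\<lambda>c. c div [:0,1:]) b = smult [:0,1:] (map_poly (\<lambda>c. c div [:0,1:]) b)"
    by simp
  also have "\<dots> = b"
    by (intro poly_eqI) (simp only: coeff_smult cm cf')
  finally have "b = [:[:0,1:]:] * map_poly (\<lambda>c. c div [:0,1:]) b" by (rule sym)
  then show ?thesis by (rule exI)
qed


definition y2 :: "'k::comm_ring_1 poly poly" where "y2 = [:0,1:]"
definition y3 :: "'k::comm_ring_1 poly poly" where "y3 = [:[:0,1:]:]"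

lemma y3_nz[simp]: "(y3 :: 'k::comm_ring_1 poly poly) \<noteq> 0" by (simp add: y3_def)
lemma tau_y2: "tau (y2 :: 'k::comm_ring_1 poly poly) = y2 + y3" by (simp add: tau_x2 y2_def y3_def)
lemma tau_y3[simp]: "tau (y3 :: 'k::comm_ring_1 poly poly) = y3" by (simp add: y3_def)
lemma mm_y: "(mm :: 'k::comm_ring_1 poly poly) = y2 * (y2 + y3)" by (simp add: mm_def y2_def y3_def)

lemma char2_R2:
  assumes "(2::'k::comm_ring_1) = 0" shows "(2::'k poly poly) = 0"
  using char2_poly[OF char2_poly[OF assms]] .

lemma char2_add2:
  assumes "(2::'a::comm_ring_1) = 0" shows "x + (x + z) = (z::'a)"
  using char2_add_self[OF assms, of x] by (simp add: add.assoc[symmetric])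

lemma char2_numeral_even:
  assumes "(2::'a::comm_ring_1) = 0" shows "(numeral (Num.Bit0 n) :: 'a) = 0"
proof -
  have "(numeral (Num.Bit0 n) :: 'a) = numeral n + numeral n" by (rule numeral_Bit0)
  also have "\<dots> = 2 * numeral n" by (rule mult_2[symmetric])
  finally have "(numeral (Num.Bit0 n) :: 'a) = 2 * numeral n" .
  then show ?thesis using assms by simp
qed

lemma char2_numeral_odd:
  assumes "(2::'a::comm_ring_1) = 0" shows "(numeral (Num.Bit1 n) :: 'a) = 1"
proof -
  have "(numeral (Num.Bit1 n) :: 'a) = numeral n + numeral n + 1" by (rule numeral_Bit1)
  also have "\<dots> = 2 * numeral n + 1" by (simp only: mult_2)
  finally have "(numeral (Num.Bit1 n) :: 'a) = 2 * numeral n + 1" .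
  then show ?thesis using assms by simp
qed

lemmas char2_R2_simps = char2_numeral_even[OF char2_R2] char2_numeral_odd[OF char2_R2]

definition NN :: "'k::comm_ring_1 mpoly3" where
  "NN = [:0,1:] * [:y2,1:] * [:y3,1:] * [:y2+y3,1:]"

definition uu :: "'k::comm_ring_1 mpoly3" where
  "uu = [: y2 * mm, y3^2, y3 :]"

lemma sig_lin: "sig [:c, 1:] = [:tau c + y2, 1:]"
  by (simp add: sig_pCons y2_def)

lemma sig_NN:
  assumes two: "(2::'k::comm_ring_1) = 0" shows "sig (NN :: 'k mpoly3) = NN"
proof -
  note c2 = char2_R2_simps[OF two]
  have "sig (NN :: 'k mpoly3) = sig [:0,1:] * sig [:y2,1:] * sig [:y3,1:] * sig [:y2+y3,1:]"
    by (simp only: NN_def sig_mult)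
  also have "\<dots> = [:y2,1:] * [:y3,1:] * [:y3+y2,1:] * [:0,1:]"
  proof -
    have s0: "sig ([:0,1:] :: 'k mpoly3) = [:y2,1:]" using sig_lin[of 0] by simp
    have s1: "sig ([:y2,1:] :: 'k mpoly3) = [:y3,1:]" using sig_lin[of "y2::'k poly poly"] by (simp add: tau_y2 c2)
    have s2: "sig ([:y3,1:] :: 'k mpoly3) = [:y3+y2,1:]" using sig_lin[of y3] by simp
    have s3: "sig ([:y2+y3,1:] :: 'k mpoly3) = [:0,1:]" using sig_lin[of "y2+y3::'k poly poly"] by (simp add: tau_y2 c2)
    show ?thesis by (simp only: s0 s1 s2 s3)
  qed
  also have "\<dots> = NN" by (simp only: NN_def mult_ac add.commute)
  finally show ?thesis .
qed

lemma sig_uu: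
  assumes two: "(2::'k::comm_ring_1) = 0" shows "sig (uu :: 'k mpoly3) = uu"
proof -
  note c2 = char2_R2_simps[OF two]
  have "sig (uu :: 'k mpoly3) = [:tau (y2*mm):] + [:y2,1:] * ([:y3^2:] + [:y2,1:] * [:y3:])"
    unfolding uu_def by (simp add: sig_pCons y2_def)
  also have "\<dots> = [:tau (y2*mm) + y2 * y3^2 + y2*y2*y3, y3^2 + y2 * y3 + y2 * y3, y3:]"
    by (simp add: algebra_simps)
  also have "tau (y2*mm) + y2 * y3^2 + y2*y2*y3 = (y2 * mm :: 'k poly poly)"
    by (simp add: tau_mm[OF two] tau_y2 mm_y algebra_simps power2_eq_square c2)
  also have "y3^2 + y2 * y3 + y2 * y3 = (y3^2 :: 'k poly poly)" by (simp add: c2 add.assoc)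
  finally show ?thesis by (simp add: uu_def)
qed

lemma lead_coeff_NN[simp]: "lead_coeff (NN :: 'k::idom mpoly3) = 1"
  by (simp add: NN_def lead_coeff_mult)

lemma degree_NN[simp]: "degree (NN :: 'k::idom mpoly3) = 4"
  by (simp add: NN_def degree_mult_eq)

lemma NN_nz[simp]: "(NN :: 'k::idom mpoly3) \<noteq> 0"
  using degree_NN by (metis degree_0 zero_neq_numeral)

definition EA :: "'k::comm_ring_1 poly poly poly \<Rightarrow> 'k mpoly3" where
  "EA P = pcompose (map_poly (\<lambda>Q. pcompose Q mm) P) NN"

lemma EA_pCons: "EA (pCons Q P) = [:pcompose Q mm:] + NN * EA P"
  by (simp add: EA_def map_poly_pCons pcompose_pCons)

lemma EA_0[simp]: "EA 0 = 0" by (simp add: EA_def)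

lemma EA_const: "EA [:Q:] = [:pcompose Q mm:]"
  using EA_pCons[of Q 0] by simp

lemma EA_add: "EA (P1 + P2) = EA P1 + EA P2"
  by (simp add: EA_def map_poly_add_hom pcompose_add)

lemma EA_mult: "EA (P1 * P2) = EA P1 * EA P2"
  by (simp add: EA_def map_poly_mult_hom pcompose_add pcompose_mult)

lemma EA_shift: "EA (pCons 0 P) = NN * EA P"
  using EA_pCons[of 0 P] by simp

lemma sig_EA:
  assumes two: "(2::'k::comm_ring_1) = 0" shows "sig (EA P :: 'k mpoly3) = EA P"
proof (induct P)
  case 0 then show ?case by simp
next
  case (pCons Q P)
  then show ?case by (simp add: EA_pCons tau_B[OF two] sig_NN[OF two])
qed


lemma sigma_fun: "sigma = sig" by (rule ext) (rule sigma_eq)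

lemma NG_x1_eq:
  assumes two: "(2::'k::comm_ring_1) = 0" shows "(NG_x1 :: 'k mpoly3) = NN"
proof -
  note c2 = char2_R2_simps[OF two]
  have f1: "sig (X1 :: 'k mpoly3) = [:y2,1:]" by (simp add: X1_def sig_X1 y2_def)
  have f2: "sig ([:y2,1:] :: 'k mpoly3) = [:y3,1:]" using sig_lin[of "y2::'k poly poly"] by (simp add: tau_y2 c2)
  have f3: "sig ([:y3,1:] :: 'k mpoly3) = [:y3+y2,1:]" using sig_lin[of "y3::'k poly poly"] by simp
  have "(NG_x1 :: 'k mpoly3) = X1 * sig X1 * sig (sig X1) * sig (sig (sig X1))"
    by (simp add: NG_x1_def sigma_fun numeral_eq_Suc lessThan_Suc mult_ac)
  also have "\<dots> = [:0,1:] * [:y2,1:] * [:y3,1:] * [:y3+y2,1:]"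
    by (simp only: f1 f2 f3) (simp add: X1_def)
  also have "\<dots> = NN" by (simp add: NN_def add.commute)
  finally show ?thesis .
qed

lemma NGH_x2_eq: "(NGH_x2 :: 'k::comm_ring_1 mpoly3) = [:mm:]"
  by (simp add: NGH_x2_def sigma_eq X2_def sig_const tau_x2 mm_def)

lemma u_elem_eq: "(u_elem :: 'k::comm_ring_1 mpoly3) = uu"
proof -
  have x: "X1 = ([:0,1:] :: 'k mpoly3)" "X2 = ([:y2:] :: 'k mpoly3)" "X3 = ([:y3:] :: 'k mpoly3)"
    by (simp_all add: X1_def X2_def X3_def y2_def y3_def)
  show ?thesis
    unfolding u_elem_def uu_def x mm_y
    by (simp add: power2_eq_square power3_eq_cube algebra_simps)
qed

lemma evalH: "poly (map_poly (\<lambda>r. [:[:r:]:]) Q) [:mm:] = [:pcompose Q mm:]"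
proof (induct Q)
  case 0 then show ?case by simp
next
  case (pCons a Q)
  then show ?case by (simp add: map_poly_pCons pcompose_pCons)
qed

lemma evalEA: "poly (map_poly (\<lambda>Q. [:pcompose Q mm:]) P) NN = EA P"
proof (induct P)
  case 0 then show ?case by simp
next
  case (pCons a P)
  then show ?case by (simp add: map_poly_pCons EA_pCons)
qed

lemma gen_alg_eq:
  assumes two: "(2::'k::comm_ring_1) = 0"
  shows "gen_alg (NG_x1 :: 'k mpoly3) NGH_x2 X3 = range EA"
proof -
  have "eval3 P (NG_x1 :: 'k mpoly3) NGH_x2 X3 = EA P" for P
    unfolding eval3_def NG_x1_eq[OF two] NGH_x2_eq by (simp add: evalG evalH evalEA)
  then show ?thesis unfolding gen_alg_def by auto
qed

lemma invariants_eq: "invariants = {f. sig f = f}"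
proof -
  have "(sigma ^^ n) f = f" if "sig f = f" for f and n :: nat
    using that by (induct n) (simp_all add: sigma_fun)
  moreover have "sig f = f" if "\<forall>n. (sigma ^^ n) f = f" for f
    using that[rule_format, of 1] by (simp add: sigma_fun)
  ultimately show ?thesis unfolding invariants_def by blast
qed


section \<open>Structure of the invariants\<close>

lemma pcomp_cubic:
  fixes c :: "'a::comm_ring_1"
  shows "pcompose [:a0,a1,a2,a3:] [:c,1:] =
    [:a0 + c*a1 + c^2*a2 + c^3*a3, a1 + 2*c*a2 + 3*c^2*a3, a2 + 3*c*a3, a3:]"
  by (simp add: pcompose_pCons algebra_simps power2_eq_square power3_eq_cube)

lemma degree_le3_form:
  assumes "degree (r::'a::zero poly) < 4" shows "r = [:coeff r 0, coeff r 1, coeff r 2, coeff r 3:]"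
  using assms by (auto simp: poly_eq_iff coeff_pCons coeff_eq_0 numeral_eq_Suc split: nat.split)


lemma c2_swap:
  fixes a b c :: "'a::comm_ring_1"
  assumes "(2::'a) = 0" "a + b = c" shows "a = c + b"
proof -
  have "b + b = 0" using char2_add_self[OF assms(1)] .
  then have "a = a + b + b" by (simp add: add.assoc)
  then show ?thesis using assms(2) by simp
qed

lemma rcase:
  fixes r :: "'k::field mpoly3"
  assumes two: "(2::'k) = 0" and dr: "degree r < 4" and sr: "sig r = r"
  shows "\<exists>Q1 Q2. r = [:pcompose Q1 mm:] + [:pcompose Q2 mm:] * uu"
proof -
  note c2 = char2_R2_simps[OF two]
  note tt = tau_tau[OF two]
  define r0 where "r0 = coeff r 0"
  define r1 where "r1 = coeff r 1"
  define r2 where "r2 = coeff r 2"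
  define r3 where "r3 = coeff r 3"
  have rf: "r = [:r0,r1,r2,r3:]" using degree_le3_form[OF dr] by (simp add: r0_def r1_def r2_def r3_def)
  have "sig r = pcompose (map_poly tau r) [:y2,1:]" by (simp add: sig_def y2_def)
  also have "map_poly tau r = [:tau r0, tau r1, tau r2, tau r3:]" unfolding rf by (simp add: map_poly_pCons)
  finally have sigr: "sig r = [:tau r0 + y2*tau r1 + y2^2*tau r2 + y2^3*tau r3,
      tau r1 + 2*y2*tau r2 + 3*y2^2*tau r3, tau r2 + 3*y2*tau r3, tau r3:]"
    by (simp only: pcomp_cubic)
  have EE: "[:tau r0 + y2*tau r1 + y2^2*tau r2 + y2^3*tau r3,
      tau r1 + 2*y2*tau r2 + 3*y2^2*tau r3, tau r2 + 3*y2*tau r3, tau r3:] = [:r0, r1, r2, r3:]"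
    using sigr sr rf by metis
  have E: "tau r0 + y2*tau r1 + y2^2*tau r2 + y2^3*tau r3 = r0"
     "tau r1 + 2*y2*tau r2 + 3*y2^2*tau r3 = r1" "tau r2 + 3*y2*tau r3 = r2" "tau r3 = r3"
    using EE unfolding pCons_eq_iff by blast+
  have E2: "tau r2 + y2 * r3 = r2" using E(3,4) by (simp add: c2)
  have E2': "tau r2 = r2 + y2 * r3" using c2_swap[OF char2_R2[OF two] E2] .
  have "tau (tau r2) = tau r2 + (y2 + y3) * r3" using E2' E(4) by (simp add: tau_y2)
  then have h1: "r2 = tau r2 + (y2 + y3) * r3" using tt[of r2] by metis
  then have h2: "r2 = (r2 + y2*r3) + (y2 + y3) * r3" using E2' by metis
  have h3: "(r2 + y2*r3) + (y2 + y3) * r3 = r2 + y3 * r3" by (simp add: algebra_simps c2)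
  have "r2 = r2 + y3 * r3" using h2 h3 by simp
  then have r3z: "r3 = 0" by simp
  have t2: "tau r2 = r2" using E2' r3z by simp
  have t1: "tau r1 = r1" using E(2) r3z t2 by (simp add: c2)
  have E0: "tau r0 + y2 * r1 + y2^2 * r2 = r0" using E(1) r3z t1 t2 by simp
  have E0a: "tau r0 + (y2 * r1 + y2^2 * r2) = r0" using E0 by (simp add: add.assoc)
  have E0': "tau r0 = r0 + (y2 * r1 + y2^2 * r2)" using c2_swap[OF char2_R2[OF two] E0a] .
  have g1: "tau (tau r0) = tau r0 + ((y2 + y3) * r1 + (y2 + y3)^2 * r2)" using E0' t1 t2 by (simp add: tau_y2)
  have g2: "r0 = tau r0 + ((y2 + y3) * r1 + (y2 + y3)^2 * r2)" using g1 tt[of r0] by metis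
  have g3: "r0 = (r0 + (y2 * r1 + y2^2 * r2)) + ((y2 + y3) * r1 + (y2 + y3)^2 * r2)" using g2 E0' by metis
  have g4: "(r0 + (y2 * r1 + y2^2 * r2)) + ((y2 + y3) * r1 + (y2 + y3)^2 * r2) = r0 + (y3 * r1 + y3^2 * r2)"
    by (simp add: algebra_simps c2 power2_eq_square)
  have "r0 = r0 + (y3 * r1 + y3^2 * r2)" using g3 g4 by simp
  then have "y3 * (r1 + y3 * r2) = 0" by (simp add: algebra_simps power2_eq_square)
  then have "r1 + y3 * r2 = 0" by simp
  then have r1e: "r1 = y3 * r2" using c2_swap[OF char2_R2[OF two], of r1 "y3 * r2" 0] by simp
  obtain w where w: "tau r0 - r0 = y3 * w" using tau_diff_dvd[of r0] by (auto simp: y3_def)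
  have "tau r0 - r0 = mm * r2" using E0' r1e by (simp add: mm_y algebra_simps power2_eq_square)
  then have "mm * r2 = [:[:0,1:]:] * w" using w by (simp add: y3_def)
  then obtain b where b: "r2 = y3 * b" using x3_dvd by (auto simp: y3_def)
  have "y3 * tau b = y3 * b" using t2 b by simp
  then have tb: "tau b = b" by simp
  then obtain Q2 where Q2: "b = pcompose Q2 mm" using inv_R2[OF two] by blast
  have "tau (r0 + y2 * mm * b) = (r0 + (y2 * r1 + y2^2 * r2)) + (y2 + y3) * mm * b"
    using E0' tb by (simp add: tau_y2 tau_mm[OF two])
  also have "\<dots> = r0 + y2 * mm * b"
    unfolding r1e b mm_y by (simp add: algebra_simps c2 power2_eq_square)
  finally have "tau (r0 + y2 * mm * b) = r0 + y2 * mm * b" .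
  then obtain Q1 where Q1: "r0 + y2 * mm * b = pcompose Q1 mm" using inv_R2[OF two] by blast
  have "[:pcompose Q1 mm:] + [:pcompose Q2 mm:] * uu = [:r0 + y2 * mm * b + b * (y2 * mm), b * y3^2, b * y3:]"
    unfolding Q1[symmetric] Q2[symmetric] uu_def by simp
  also have "\<dots> = r"
    unfolding rf r3z r1e b by (simp add: algebra_simps c2 power2_eq_square)
  finally show ?thesis by metis
qed


lemma inv_struct:
  fixes f :: "'k::field mpoly3"
  assumes two: "(2::'k) = 0" and "sig f = f"
  shows "\<exists>P1 P2. f = EA P1 + EA P2 * uu"
  using assms(2)
proof (induct "degree f" arbitrary: f rule: less_induct)
  case less
  obtain q r where fqr: "f = NN * q + r" and dr: "degree r < 4"
    using monic_divide_ex[OF lead_coeff_NN, of f] by auto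
  have "NN * q + r = NN * sig q + sig r"
    using less.prems fqr by (metis sig_add sig_mult sig_NN[OF two])
  from monic_divide_unique[OF lead_coeff_NN this] dr
  have sq: "sig q = q" and sr: "sig r = r" by auto
  obtain Q1 Q2 where r: "r = [:pcompose Q1 mm:] + [:pcompose Q2 mm:] * uu"
    using rcase[OF two dr sr] by blast
  show ?case
  proof (cases "q = 0")
    case True
    then show ?thesis using fqr r by (intro exI[of _ "[:Q1:]"] exI[of _ "[:Q2:]"]) (simp add: EA_const)
  next
    case False
    have dq: "degree (NN * q) = 4 + degree q" using False by (simp add: degree_mult_eq)
    have "degree f = 4 + degree q"
      using fqr dr dq degree_add_eq_left[of r "NN * q"] by (simp add: add.commute)
    then obtain P1 P2 where "q = EA P1 + EA P2 * uu" using less.hyps[of q] sq by auto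
    then have "f = EA (pCons Q1 P1) + EA (pCons Q2 P2) * uu"
      using fqr r by (simp add: EA_pCons algebra_simps)
    then show ?thesis by blast
  qed
qed

lemma degree_uu[simp]: "degree (uu :: 'k::comm_ring_1 mpoly3) = 2"
  by (simp add: uu_def y3_def)

lemma free_EA:
  fixes P1 P2 :: "'k::field poly poly poly"
  assumes "EA P1 + EA P2 * uu = 0"
  shows "P1 = 0 \<and> P2 = 0"
  using assms
proof (induct P1 P2 rule: poly_induct2)
  case 0 then show ?case by simp
next
  case (pCons a p b q)
  define c where "c = [:pcompose a mm:] + [:pcompose b mm:] * (uu :: 'k mpoly3)"
  define X where "X = EA p + EA q * uu"
  have eq: "c + NN * X = 0" using pCons.prems unfolding c_def X_def by (simp add: EA_pCons algebra_simps)
  have dc: "degree c \<le> 2"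
  proof -
    have "degree ([:pcompose b mm:] * (uu :: 'k mpoly3)) \<le> 2"
      using degree_mult_le[of "[:pcompose b mm:]" "uu :: 'k mpoly3"] by simp
    then show ?thesis unfolding c_def using degree_add_le[of "[:pcompose a mm:]" 2] by simp
  qed
  have X0: "X = 0"
  proof (rule ccontr)
    assume "X \<noteq> 0"
    then have "degree (NN * X) = 4 + degree X" by (simp add: degree_mult_eq)
    then have "degree (c + NN * X) = degree (NN * X)" using dc by (intro degree_add_eq_right) simp
    then show False using eq \<open>degree (NN * X) = 4 + degree X\<close> by simp
  qed
  then have pq: "p = 0 \<and> q = 0" using pCons.hyps unfolding X_def by blast
  have c0: "c = 0" using eq X0 by simp
  have "coeff c 2 = pcompose b mm * y3" unfolding c_def uu_def by (simp add: numeral_2_eq_2)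
  then have "pcompose b mm = 0" using c0 by simp
  then have b0: "b = 0" using pcompose_eq_0[of b mm] by simp
  then have "pcompose a mm = 0" using c0 unfolding c_def by simp
  then have "a = 0" using pcompose_eq_0[of a mm] by simp
  then show ?case using b0 pq by simp
qed


section \<open>Grading homomorphism\<close>

definition gr :: "('a::comm_ring_1 \<Rightarrow> 'a poly) \<Rightarrow> 'a poly \<Rightarrow> 'a poly poly" where
  "gr h p = poly (map_poly (\<lambda>c. map_poly (\<lambda>a. [:a:]) (h c)) p) [:0, [:0,1:]:]"

lemma gr_pCons:
  assumes "h 0 = 0"
  shows "gr h (pCons c p) = map_poly (\<lambda>a. [:a:]) (h c) + [:0, [:0,1:]:] * gr h p"
  using assms by (simp add: gr_def map_poly_pCons)

lemma coeff_gr: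
  assumes h0: "h 0 = 0"
  shows "coeff (coeff (gr h p) d) i = (if i \<le> d then coeff (h (coeff p i)) (d - i) else 0)"
proof (induct p arbitrary: d i)
  case 0 then show ?case by (simp add: gr_def h0)
next
  case (pCons c p)
  have "coeff (gr h (pCons c p)) d =
      [:coeff (h c) d:] + (if d = 0 then 0 else [:0,1:] * coeff (gr h p) (d - 1))"
    by (simp add: gr_pCons h0 coeff_map_poly coeff_pCons split: nat.split)
  then show ?case using pCons.hyps
    by (cases d; cases i) (auto simp: coeff_pCons)
qed

lemma gr_add:
  assumes "h 0 = 0" "\<And>x y. h (x + y) = h x + h y"
  shows "gr h (p + q) = gr h p + gr h q"
proof -
  have "map_poly (\<lambda>c. map_poly (\<lambda>a. [:a:]) (h c)) (p + q) =
    map_poly (\<lambda>c. map_poly (\<lambda>a. [:a:]) (h c)) p + map_poly (\<lambda>c. map_poly (\<lambda>a. [:a:]) (h c)) q"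
    by (rule map_poly_add_hom) (simp_all add: assms map_poly_add_hom)
  then show ?thesis by (simp add: gr_def)
qed

lemma gr_mult:
  assumes "h 0 = 0" "\<And>x y. h (x + y) = h x + h y" "\<And>x y. h (x * y) = h x * h y"
  shows "gr h (p * q) = gr h p * gr h q"
proof -
  have l0: "map_poly (\<lambda>a. [:a:]) (x + y) = map_poly (\<lambda>a. [:a:]) x + map_poly (\<lambda>a. [:a:]) y" for x y :: "'a poly"
    by (rule map_poly_add_hom) simp_all
  have l1: "map_poly (\<lambda>a. [:a:]) (x * y) = map_poly (\<lambda>a. [:a:]) x * map_poly (\<lambda>a. [:a:]) y" for x y :: "'a poly"
    by (rule map_poly_mult_hom) simp_all
  have "map_poly (\<lambda>c. map_poly (\<lambda>a. [:a:]) (h c)) (p * q) =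
    map_poly (\<lambda>c. map_poly (\<lambda>a. [:a:]) (h c)) p * map_poly (\<lambda>c. map_poly (\<lambda>a. [:a:]) (h c)) q"
    by (rule map_poly_mult_hom) (simp_all add: assms l0 l1)
  then show ?thesis by (simp add: gr_def)
qed

definition h1 :: "'k::comm_ring_1 poly \<Rightarrow> 'k poly poly" where "h1 = gr (\<lambda>c. [:c:])"
definition h2 :: "'k::comm_ring_1 poly poly \<Rightarrow> 'k poly poly poly" where "h2 = gr h1"
definition h3 :: "'k::comm_ring_1 mpoly3 \<Rightarrow> 'k mpoly3 poly" where "h3 = gr h2"

lemma h1_0[simp]: "h1 0 = 0" by (simp add: h1_def gr_def)
lemma h2_0[simp]: "h2 0 = 0" by (simp add: h2_def gr_def)
lemma h1_add: "h1 (x + y) = h1 x + h1 y" unfolding h1_def by (rule gr_add) simp_all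
lemma h2_add: "h2 (x + y) = h2 x + h2 y" unfolding h2_def by (rule gr_add) (simp_all add: h1_add)
lemma h3_add: "h3 (x + y) = h3 x + h3 y" unfolding h3_def by (rule gr_add) (simp_all add: h2_add)
lemma h1_mult: "h1 (x * y) = h1 x * h1 y" unfolding h1_def by (rule gr_mult) simp_all
lemma h2_mult: "h2 (x * y) = h2 x * h2 y" unfolding h2_def by (rule gr_mult) (simp_all add: h1_add h1_mult)
lemma h3_mult: "h3 (x * y) = h3 x * h3 y" unfolding h3_def by (rule gr_mult) (simp_all add: h2_add h2_mult)

lemma coeff3_h3:
  "coeff3 (coeff (h3 p) d) i j k = (if i + j + k = d then coeff3 p i j k else 0)"
proof -
  have a: "coeff (coeff (h3 p) d) i = (if i \<le> d then coeff (h2 (coeff p i)) (d - i) else 0)"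
    unfolding h3_def by (rule coeff_gr) simp
  have b: "coeff (coeff (h2 q) e) j = (if j \<le> e then coeff (h1 (coeff q j)) (e - j) else 0)" for q e
    unfolding h2_def by (rule coeff_gr) simp
  have c: "coeff (coeff (h1 r) e) k = (if k \<le> e then coeff [:coeff r k:] (e - k) else 0)" for r e
    unfolding h1_def by (rule coeff_gr) simp
  show ?thesis unfolding coeff3_def by (simp add: a b c coeff_pCons split: nat.split) arith
qed


lemma coeff3_eqI: "(\<And>i j k. coeff3 p i j k = coeff3 q i j k) \<Longrightarrow> p = q"
  by (simp add: coeff3_def poly_eq_iff)

lemma hom_iff: "homogeneous d p \<longleftrightarrow> h3 p = monom p d"
proof
  assume H: "homogeneous d p"
  show "h3 p = monom p d"
  proof (rule poly_eqI)
    fix e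
    show "coeff (h3 p) e = coeff (monom p d) e"
    proof (rule coeff3_eqI)
      fix i j k
      show "coeff3 (coeff (h3 p) e) i j k = coeff3 (coeff (monom p d) e) i j k"
        using H unfolding coeff3_h3 homogeneous_def by (auto simp: coeff_monom coeff3_def)
    qed
  qed
next
  assume H: "h3 p = monom p d"
  show "homogeneous d p" unfolding homogeneous_def
  proof (intro allI impI)
    fix i j k assume "coeff3 p i j k \<noteq> 0"
    moreover have "coeff3 (coeff (h3 p) d) i j k = (if i + j + k = d then coeff3 p i j k else 0)"
      by (rule coeff3_h3)
    ultimately show "i + j + k = d" using H by (auto simp: coeff_monom split: if_splits)
  qed
qed

lemma homogeneous_hc: "homogeneous d (coeff (h3 p) d)"
  unfolding homogeneous_def coeff3_h3 by auto

lemma hc_homog: "homogeneous d p \<Longrightarrow> coeff (h3 p) e = (if e = d then p else 0)"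
  by (simp add: hom_iff coeff_monom)

lemma homogeneous_0[simp]: "homogeneous d 0"
  by (simp add: homogeneous_def coeff3_def)

lemma homogeneous_add: "homogeneous d (p::'k::comm_ring_1 mpoly3) \<Longrightarrow> homogeneous d q \<Longrightarrow> homogeneous d (p + q)"
  unfolding hom_iff h3_add by (simp add: add_monom)

lemma homogeneous_mult: "homogeneous d (p::'k::comm_ring_1 mpoly3) \<Longrightarrow> homogeneous e q \<Longrightarrow> homogeneous (d + e) (p * q)"
  unfolding hom_iff h3_mult by (simp add: mult_monom)

lemma homogeneous_const3: "homogeneous 0 (const3 c)"
  by (simp add: homogeneous_def coeff3_def const3_def coeff_pCons split: nat.split)

lemma homogeneous_X1: "homogeneous 1 X1"
  by (simp add: homogeneous_def coeff3_def X1_def coeff_pCons split: nat.split)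
lemma homogeneous_X2: "homogeneous 1 X2"
  by (simp add: homogeneous_def coeff3_def X2_def coeff_pCons split: nat.split)
lemma homogeneous_X3: "homogeneous 1 X3"
  by (simp add: homogeneous_def coeff3_def X3_def coeff_pCons split: nat.split)

lemma homogeneous_scale3: "homogeneous d p \<Longrightarrow> homogeneous d (scale3 c p)"
  using homogeneous_mult[OF homogeneous_const3, of d p c] by (simp add: scale3_def)

lemma h3_const3: "h3 (const3 c) = [:const3 c:]"
  using homogeneous_const3[of c] by (simp add: hom_iff monom_0)

lemma hc_add: "coeff (h3 (p + q)) d = coeff (h3 p) d + coeff (h3 q) d"
  by (simp add: h3_add)

lemma hc_scale3: "coeff (h3 (scale3 c p)) d = scale3 c (coeff (h3 p) d)"
  by (simp add: scale3_def h3_mult h3_const3)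


definition AA :: "'k::comm_ring_1 mpoly3 set" where "AA = range EA"

lemma AA_add:
  assumes "a \<in> AA" "b \<in> AA" shows "a + b \<in> AA"
proof -
  from assms obtain P Q where "a = EA P" "b = EA Q" unfolding AA_def by blast
  then have "a + b = EA (P + Q)" by (simp add: EA_add)
  then show ?thesis unfolding AA_def by blast
qed
lemma AA_mult:
  assumes "a \<in> AA" "b \<in> AA" shows "a * b \<in> AA"
proof -
  from assms obtain P Q where "a = EA P" "b = EA Q" unfolding AA_def by blast
  then have "a * b = EA (P * Q)" by (simp add: EA_mult)
  then show ?thesis unfolding AA_def by blast
qed
lemma AA_0: "0 \<in> AA" unfolding AA_def by (metis EA_0 rangeI)
lemma AA_sum: "(\<And>x. x \<in> S \<Longrightarrow> f x \<in> AA) \<Longrightarrow> sum f S \<in> AA"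
  by (induct S rule: infinite_finite_induct) (auto intro: AA_add AA_0)
lemma AA_const3: "const3 c \<in> AA"
proof -
  have "EA [:[:[:c:]:]:] = const3 c" by (simp add: EA_const const3_def)
  then show ?thesis unfolding AA_def by (metis rangeI)
qed
lemma AA_scale3: "a \<in> AA \<Longrightarrow> scale3 c a \<in> AA"
  unfolding scale3_def by (intro AA_mult AA_const3)
lemma AA_uminus: "a \<in> AA \<Longrightarrow> - a \<in> AA"
proof -
  assume "a \<in> AA"
  then obtain P where "a = EA P" unfolding AA_def by blast
  moreover have "EA (- P) = - EA P" using EA_add[of P "-P"] by (simp add: eq_neg_iff_add_eq_0 add.commute)
  ultimately show ?thesis unfolding AA_def by (metis rangeI)
qed
lemma AA_NN: "NN \<in> AA"
proof -
  have e1: "EA 1 = 1" by (metis EA_const one_pCons pcompose_1)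
  have "EA [:0, 1:] = NN" using EA_shift[of 1] by (simp add: e1 one_pCons[symmetric])
  then show ?thesis unfolding AA_def by (metis rangeI)
qed
lemma AA_mm: "[:mm:] \<in> AA"
proof -
  have "EA [:[:0, 1:]:] = [:mm:]" by (simp add: EA_const pcompose_pCons)
  then show ?thesis unfolding AA_def by (metis rangeI)
qed
lemma AA_X3: "X3 \<in> AA"
proof -
  have "EA [:[:[:0, 1:]:]:] = X3" by (simp add: EA_const X3_def)
  then show ?thesis unfolding AA_def by (metis rangeI)
qed

lemma homogeneous_power: "homogeneous d (p :: 'k::comm_ring_1 mpoly3) \<Longrightarrow> homogeneous (n * d) (p ^ n)"
proof (induct n)
  case 0 then show ?case using homogeneous_const3[of 1] by (simp add: const3_def one_pCons)
next
  case (Suc n) then show ?case using homogeneous_mult[of d p "n * d" "p ^ n"] by simp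
qed

lemma X_forms: "X1 = ([:0,1:] :: 'k::comm_ring_1 mpoly3)" "X2 = ([:y2:] :: 'k mpoly3)" "X3 = ([:y3:] :: 'k mpoly3)"
  by (simp_all add: X1_def X2_def X3_def y2_def y3_def)

lemma homogeneous_NN: "homogeneous 4 (NN :: 'k::comm_ring_1 mpoly3)"
proof -
  have "(NN :: 'k mpoly3) = X1 * (X2 + X1) * (X3 + X1) * (X2 + X3 + X1)"
    unfolding NN_def X_forms by simp
  moreover have "homogeneous (1 + 1 + 1 + 1) (X1 * (X2 + X1) * (X3 + X1) * (X2 + X3 + X1) :: 'k mpoly3)"
    by (intro homogeneous_mult homogeneous_add homogeneous_X1 homogeneous_X2 homogeneous_X3)
  ultimately show ?thesis by (simp add: numeral_eq_Suc)
qed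

lemma homogeneous_mm: "homogeneous 2 ([:mm:] :: 'k::comm_ring_1 mpoly3)"
proof -
  have "([:mm:] :: 'k mpoly3) = X2 * (X2 + X3)"
    unfolding mm_y X_forms by simp
  moreover have "homogeneous (1 + 1) (X2 * (X2 + X3) :: 'k mpoly3)"
    by (intro homogeneous_mult homogeneous_add homogeneous_X2 homogeneous_X3)
  ultimately show ?thesis by (simp add: numeral_eq_Suc)
qed

lemma homogeneous_uu: "homogeneous 3 (uu :: 'k::comm_ring_1 mpoly3)"
proof -
  have "(uu :: 'k mpoly3) = X1*X1*X3 + X1*X3*X3 + X2*X2*X2 + X2*X2*X3"
    unfolding u_elem_eq[symmetric] u_elem_def by (simp add: power2_eq_square power3_eq_cube)
  moreover have "homogeneous (1+1+1) (X1*X1*X3 + X1*X3*X3 + X2*X2*X2 + X2*X2*X3 :: 'k mpoly3)"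
    by (intro homogeneous_mult homogeneous_add homogeneous_X1 homogeneous_X2 homogeneous_X3)
  ultimately show ?thesis by (simp add: numeral_eq_Suc)
qed

lemma poly_map_in:
  assumes add: "\<And>x y. x \<in> S \<Longrightarrow> y \<in> S \<Longrightarrow> x + y \<in> S"
    and mult: "\<And>x y. x \<in> S \<Longrightarrow> y \<in> S \<Longrightarrow> x * y \<in> S"
    and zero: "0 \<in> S" and z: "z \<in> S" and f: "\<And>c. f c \<in> S" and f0: "f 0 = 0"
  shows "poly (map_poly f p) z \<in> S"
proof (induct p)
  case 0 then show ?case using zero by simp
next
  case (pCons a p)
  then show ?case using f0 by (simp add: map_poly_pCons add mult f z)
qed

definition SS :: "'k::comm_ring_1 mpoly3 set" where "SS = {x. \<forall>d. coeff (h3 x) d \<in> AA}"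

lemma SS_add: "x \<in> SS \<Longrightarrow> y \<in> SS \<Longrightarrow> x + y \<in> SS"
  unfolding SS_def by (simp add: h3_add AA_add)
lemma SS_mult: "x \<in> SS \<Longrightarrow> y \<in> SS \<Longrightarrow> x * y \<in> SS"
  unfolding SS_def by (simp add: h3_mult coeff_mult AA_sum AA_mult)
lemma SS_hom: "x \<in> AA \<Longrightarrow> homogeneous e x \<Longrightarrow> x \<in> SS"
  unfolding SS_def by (simp add: hc_homog AA_0)
lemma SS_0: "0 \<in> SS" using SS_hom[OF AA_0 homogeneous_0] .

lemma TESTX: "poly (map_poly const3 r) X3 \<in> (SS :: 'k::comm_ring_1 mpoly3 set)"
  apply (rule poly_map_in[where S="SS :: 'k::comm_ring_1 mpoly3 set"])
  apply (rule SS_add, assumption, assumption)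
  apply (rule SS_mult, assumption, assumption)
  apply (rule SS_0)
  apply (rule SS_hom[OF AA_X3 homogeneous_X3])
  apply (rule SS_hom[OF AA_const3 homogeneous_const3])
  apply (rule const3_0)
  done

lemma SS_q: "[:pcompose Q mm:] \<in> (SS :: 'k::comm_ring_1 mpoly3 set)"
  unfolding evalH[symmetric]
  apply (rule poly_map_in[where S="SS :: 'k::comm_ring_1 mpoly3 set"])
  apply (rule SS_add, assumption, assumption)
  apply (rule SS_mult, assumption, assumption)
  apply (rule SS_0)
  apply (rule SS_hom[OF AA_mm homogeneous_mm])
  apply (subst evalG[symmetric], rule TESTX)
  apply simp
  done

lemma EA_SS: "EA (P :: 'k::comm_ring_1 poly poly poly) \<in> SS"
  unfolding evalEA[symmetric]
  apply (rule poly_map_in[where S="SS :: 'k::comm_ring_1 mpoly3 set"])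
  apply (rule SS_add, assumption, assumption)
  apply (rule SS_mult, assumption, assumption)
  apply (rule SS_0)
  apply (rule SS_hom[OF AA_NN homogeneous_NN])
  apply (rule SS_q)
  apply simp
  done

lemma hc_AA: "a \<in> AA \<Longrightarrow> coeff (h3 a) d \<in> AA"
  using EA_SS unfolding AA_def SS_def by blast

lemma graded_decomp:
  fixes f :: "'k::field mpoly3"
  assumes two: "(2::'k) = 0" and sf: "sig f = f" and hf: "homogeneous d f"
  shows "\<exists>a b. a \<in> AA \<and> homogeneous d a \<and> b \<in> AA \<and> homogeneous (d - 3) b \<and> (d < 3 \<longrightarrow> b = 0)
     \<and> f = a + b * uu"
proof -
  obtain P1 P2 where f: "f = EA P1 + EA P2 * uu" using inv_struct[OF two sf] by blast
  define a where "a = coeff (h3 (EA P1)) d"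
  define b where "b = (if d < 3 then 0 else coeff (h3 (EA P2)) (d - 3))"
  have huu: "h3 (uu :: 'k mpoly3) = monom uu 3" using homogeneous_uu hom_iff by blast
  have "f = coeff (h3 f) d" using hc_homog[OF hf] by simp
  also have "\<dots> = a + b * uu"
    unfolding f h3_add h3_mult coeff_add a_def b_def
    using huu by (simp add: mult.commute[of _ "monom uu 3"] coeff_monom_mult)
  finally have "f = a + b * uu" .
  moreover have "a \<in> AA" unfolding a_def AA_def by (rule hc_AA[unfolded AA_def]) blast
  moreover have "b \<in> AA" unfolding b_def using hc_AA[of "EA P2"] AA_0 unfolding AA_def by auto
  moreover have "homogeneous d a" unfolding a_def by (rule homogeneous_hc)
  moreover have "homogeneous (d - 3) b" unfolding b_def by (simp add: homogeneous_hc)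
  ultimately show ?thesis unfolding b_def by (cases "d < 3") auto
qed


section \<open>Vector space structure\<close>

lemma const3_add: "const3 (a + b) = const3 a + const3 b" by (simp add: const3_def)
lemma const3_mult: "const3 (a * b) = const3 a * const3 b" by (simp add: const3_def)
lemma const3_1: "const3 1 = 1" by (simp add: const3_def one_pCons)

interpretation V3: vector_space "scale3 :: 'k::field \<Rightarrow> 'k mpoly3 \<Rightarrow> 'k mpoly3"
  by unfold_locales (simp_all add: scale3_def const3_add const3_mult const3_1 algebra_simps)

lemma (in vector_space) independent_Un_0:
  assumes S: "independent S" and T: "independent T"
    and ST: "\<And>x y. x \<in> span S \<Longrightarrow> y \<in> span T \<Longrightarrow> x + y = 0 \<Longrightarrow> x = 0"
  shows "independent (S \<union> T)"
proof
  assume "dependent (S \<union> T)"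
  then obtain U u where U: "finite U" "U \<subseteq> S \<union> T" "(\<Sum>w\<in>U. scale (u w) w) = 0" and v: "\<exists>v\<in>U. u v \<noteq> 0"
    unfolding dependent_explicit by blast
  define U1 where "U1 = U \<inter> S"
  define U2 where "U2 = U - S"
  have fin: "finite U1" "finite U2" using U(1) by (auto simp: U1_def U2_def)
  have UU: "U = U1 \<union> U2" "U1 \<inter> U2 = {}" by (auto simp: U1_def U2_def)
  have sub: "U1 \<subseteq> S" "U2 \<subseteq> T" using U(2) by (auto simp: U1_def U2_def)
  have sum: "(\<Sum>w\<in>U1. scale (u w) w) + (\<Sum>w\<in>U2. scale (u w) w) = 0"
    using U(3) unfolding UU(1) by (simp add: sum.union_disjoint[OF fin UU(2)])
  have x: "(\<Sum>w\<in>U1. scale (u w) w) \<in> span S"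
    using sub(1) by (intro span_sum span_scale span_base) auto
  have y: "(\<Sum>w\<in>U2. scale (u w) w) \<in> span T"
    using sub(2) by (intro span_sum span_scale span_base) auto
  have x0: "(\<Sum>w\<in>U1. scale (u w) w) = 0" using ST[OF x y sum] .
  then have y0: "(\<Sum>w\<in>U2. scale (u w) w) = 0" using sum by simp
  from v obtain w where w: "w \<in> U" "u w \<noteq> 0" by blast
  show False
  proof (cases "w \<in> S")
    case True
    then have "w \<in> U1" using w by (simp add: U1_def)
    then show False using independentD[OF S fin(1) sub(1) x0] w by blast
  next
    case False
    then have "w \<in> U2" using w by (simp add: U2_def)
    then show False using independentD[OF T fin(2) sub(2) y0] w by blast
  qed
qed

lemma subspace_AA: "V3.subspace (AA :: 'k::field mpoly3 set)"
  by (rule V3.subspaceI) (simp_all add: AA_0 AA_add AA_scale3)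

lemma subspace_graded_AA: "V3.subspace (graded_part (AA :: 'k::field mpoly3 set) d)"
  by (rule V3.subspaceI) (auto simp: graded_part_def AA_0 AA_add AA_scale3 homogeneous_add homogeneous_scale3)

definition Mon :: "nat \<Rightarrow> 'k::comm_ring_1 mpoly3 set" where
  "Mon d = (\<lambda>(i,j,k). monom (monom (monom 1 k) j) i) ` ({..d} \<times> {..d} \<times> {..d})"

lemma finite_Mon: "finite (Mon d)" by (simp add: Mon_def)

lemma card_Mon: "card (Mon d) \<le> (d + 1) ^ 3"
proof -
  have "card (Mon d) \<le> card ({..d} \<times> {..d} \<times> {..d})" unfolding Mon_def by (rule card_image_le) simp
  also have "\<dots> = (d + 1) ^ 3" by (simp add: card_cartesian_product power3_eq_cube)
  finally show ?thesis .
qed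

lemma coeff3_sum: "coeff3 (sum f S) a b c = (\<Sum>x\<in>S. coeff3 (f x) a b c)"
  by (simp add: coeff3_def coeff_sum)

lemma coeff3_scale3: "coeff3 (scale3 c p) a b e = c * coeff3 p a b e"
  by (simp add: coeff3_def scale3_def const3_def)

lemma coeff3_monom: "coeff3 (monom (monom (monom 1 k) j) i) a b c = (if (i,j,k) = (a,b,c) then 1 else 0)"
  by (simp add: coeff3_def coeff_monom)

lemma homogeneous_expand:
  fixes p :: "'k::field mpoly3"
  assumes "homogeneous d p"
  shows "p = (\<Sum>x\<in>{..d} \<times> {..d} \<times> {..d}. scale3 (coeff3 p (fst x) (fst (snd x)) (snd (snd x)))
              (monom (monom (monom 1 (snd (snd x))) (fst (snd x))) (fst x)))"
proof (rule coeff3_eqI)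
  fix a b c
  have "coeff3 (\<Sum>x\<in>{..d} \<times> {..d} \<times> {..d}. scale3 (coeff3 p (fst x) (fst (snd x)) (snd (snd x)))
              (monom (monom (monom 1 (snd (snd x))) (fst (snd x))) (fst x))) a b c
     = (\<Sum>x\<in>{..d} \<times> {..d} \<times> {..d}. if x = (a,b,c) then coeff3 p a b c else 0)"
    unfolding coeff3_sum coeff3_scale3 coeff3_monom
    by (intro sum.cong refl) (auto simp: prod_eq_iff)
  also have "\<dots> = (if (a,b,c) \<in> {..d} \<times> {..d} \<times> {..d} then coeff3 p a b c else 0)"
    by (simp add: sum.delta')
  also have "\<dots> = coeff3 p a b c"
  proof (cases "coeff3 p a b c = 0")
    case False
    then have "a + b + c = d" using assms unfolding homogeneous_def by blast
    then show ?thesis by auto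
  qed simp
  finally show "coeff3 p a b c = coeff3 (\<Sum>x\<in>{..d} \<times> {..d} \<times> {..d}. scale3 (coeff3 p (fst x) (fst (snd x)) (snd (snd x)))
              (monom (monom (monom 1 (snd (snd x))) (fst (snd x))) (fst x))) a b c" by (rule sym)
qed

lemma mon_in_Mon: "i \<le> d \<Longrightarrow> j \<le> d \<Longrightarrow> k \<le> d \<Longrightarrow> monom (monom (monom 1 k) j) i \<in> Mon d"
  unfolding Mon_def by (rule image_eqI[where x="(i,j,k)"]) auto

lemma homogeneous_in_span: "homogeneous d (p :: 'k::field mpoly3) \<Longrightarrow> p \<in> V3.span (Mon d)"
  apply (subst homogeneous_expand, assumption)
  apply (intro V3.span_sum V3.span_scale V3.span_base)
  apply (auto intro!: mon_in_Mon)
  done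

lemma graded_basis:
  fixes M :: "'k::field mpoly3 set"
  obtains B where "B \<subseteq> graded_part M d" "V3.independent B" "graded_part M d \<subseteq> V3.span B"
    "card B = V3.dim (graded_part M d)" "finite B"
proof -
  obtain B where B: "B \<subseteq> graded_part M d" "V3.independent B" "graded_part M d \<subseteq> V3.span B"
    "card B = V3.dim (graded_part M d)"
    using V3.basis_exists by blast
  have "B \<subseteq> V3.span (Mon d)" using B(1) homogeneous_in_span by (auto simp: graded_part_def)
  then have "finite B" using V3.independent_span_bound[OF finite_Mon B(2)] by blast
  then show ?thesis using B that by blast
qed

lemma dim_graded_le: "V3.dim (graded_part (M :: 'k::field mpoly3 set) d) \<le> (d + 1) ^ 3"
proof -
  have "graded_part M d \<subseteq> V3.span (Mon d)" using homogeneous_in_span by (auto simp: graded_part_def)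
  then have "V3.dim (graded_part M d) \<le> card (Mon d :: 'k mpoly3 set)" by (rule V3.dim_le_card[OF _ finite_Mon])
  then show ?thesis by (rule order_trans[OF _ card_Mon])
qed


lemma free_AA:
  fixes a b :: "'k::field mpoly3"
  assumes "a \<in> AA" "b \<in> AA" "a + b * uu = 0" shows "a = 0 \<and> b = 0"
proof -
  obtain P1 P2 where "a = EA P1" "b = EA P2" using assms(1,2) unfolding AA_def by blast
  then show ?thesis using free_EA[of P1 P2] assms(3) by auto
qed

lemma uu_nz[simp]: "(uu :: 'k::comm_ring_1 mpoly3) \<noteq> 0"
  using degree_uu by (metis degree_0 zero_neq_numeral)

lemma dim_I:
  fixes dummy :: "'k::field itself"
  assumes two: "(2::'k) = 0"
  shows "V3.dim (graded_part ({f. sig f = f} :: 'k mpoly3 set) d) =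
     V3.dim (graded_part (AA :: 'k mpoly3 set) d) +
     (if 3 \<le> d then V3.dim (graded_part (AA :: 'k mpoly3 set) (d - 3)) else 0)"
proof -
  define Inv where "Inv = ({f. sig f = f} :: 'k mpoly3 set)"
  obtain BA where BA: "BA \<subseteq> graded_part (AA :: 'k mpoly3 set) d" "V3.independent BA"
      "graded_part AA d \<subseteq> V3.span BA" "card BA = V3.dim (graded_part (AA :: 'k mpoly3 set) d)" "finite BA"
    using graded_basis by blast
  obtain B0 where B0: "B0 \<subseteq> graded_part (AA :: 'k mpoly3 set) (d - 3)" "V3.independent B0"
      "graded_part AA (d - 3) \<subseteq> V3.span B0" "card B0 = V3.dim (graded_part (AA :: 'k mpoly3 set) (d - 3))"
      "finite B0"
    using graded_basis by blast
  define BB where "BB = (if 3 \<le> d then B0 else {})"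
  have BB: "BB \<subseteq> graded_part AA (d - 3)" "V3.independent BB" "finite BB"
    "card BB = (if 3 \<le> d then V3.dim (graded_part (AA :: 'k mpoly3 set) (d - 3)) else 0)"
    using B0 by (auto simp: BB_def V3.independent_empty)
  have BB3: "b \<in> BB \<Longrightarrow> 3 \<le> d" for b by (auto simp: BB_def split: if_splits)
  define mu where "mu = (\<lambda>b::'k mpoly3. b * uu)"
  have lin: "Vector_Spaces.linear scale3 scale3 mu"
    unfolding Vector_Spaces.linear_iff using V3.vector_space_axioms
    by (simp add: mu_def scale3_def algebra_simps)
  interpret L: Vector_Spaces.linear scale3 scale3 mu by (rule lin)
  have inj: "inj_on mu X" for X by (auto simp: inj_on_def mu_def)
  have ind_mu: "V3.independent (mu ` BB)" by (rule L.independent_injective_image[OF BB(2) inj])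
  have spanA: "V3.span (graded_part AA e) \<subseteq> (AA :: 'k mpoly3 set)" for e
    by (rule V3.span_minimal) (auto simp: graded_part_def subspace_AA)
  have spanBA: "V3.span BA \<subseteq> AA" using V3.span_mono[OF BA(1)] spanA by blast
  have spanBB: "V3.span BB \<subseteq> AA" using V3.span_mono[OF BB(1)] spanA by blast
  define C where "C = BA \<union> mu ` BB"
  have indC: "V3.independent C"
    unfolding C_def
  proof (rule V3.independent_Un_0[OF BA(2) ind_mu])
    fix x y assume x: "x \<in> V3.span BA" and y: "y \<in> V3.span (mu ` BB)" and xy: "x + y = 0"
    have "y \<in> mu ` V3.span BB" using y L.span_image by simp
    then obtain b where b: "b \<in> V3.span BB" "y = b * uu" unfolding mu_def by blast
    show "x = 0" using free_AA[of x b] x b spanBA spanBB xy by blast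
  qed
  have disj: "BA \<inter> mu ` BB = {}"
  proof (rule ccontr)
    assume "BA \<inter> mu ` BB \<noteq> {}"
    then obtain b where b: "b \<in> BB" "b * uu \<in> BA" unfolding mu_def by blast
    have "b * uu + (- b) * uu = 0" by simp
    moreover have "b * uu \<in> AA" "- b \<in> AA" using b BA(1) BB(1) AA_uminus by (auto simp: graded_part_def)
    ultimately have "b * uu = 0" using free_AA by blast
    then show False using b BA(2) V3.dependent_zero by metis
  qed
  have cardC: "card C = card BA + card BB"
    unfolding C_def using card_Un_disjoint[OF BA(5) finite_imageI[OF BB(3)] disj]
      card_image[OF inj[of BB]] by simp
  have CI: "C \<subseteq> graded_part Inv d"
  proof
    fix x assume "x \<in> C"
    then consider "x \<in> BA" | b where "b \<in> BB" "x = b * uu" unfolding C_def mu_def by blast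
    then show "x \<in> graded_part Inv d"
    proof cases
      case 1
      then have "x \<in> AA" "homogeneous d x" using BA(1) by (auto simp: graded_part_def)
      then show ?thesis unfolding Inv_def graded_part_def AA_def using sig_EA[OF two] by auto
    next
      case 2
      then have "b \<in> AA" "homogeneous (d - 3) b" "3 \<le> d" using BB(1) BB3 by (auto simp: graded_part_def)
      moreover have "homogeneous (d - 3 + 3) (b * uu)"
        using homogeneous_mult[OF \<open>homogeneous (d - 3) b\<close> homogeneous_uu] .
      ultimately show ?thesis unfolding Inv_def graded_part_def AA_def using 2 sig_EA[OF two] sig_uu[OF two]
        by auto
    qed
  qed
  have IC: "graded_part Inv d \<subseteq> V3.span C"
  proof
    fix f assume "f \<in> graded_part Inv d"
    then have "sig f = f" "homogeneous d f" unfolding Inv_def graded_part_def by auto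
    then obtain a b where ab: "a \<in> AA" "homogeneous d a" "b \<in> AA" "homogeneous (d - 3) b"
        "d < 3 \<longrightarrow> b = 0" "f = a + b * uu"
      using graded_decomp[OF two] by blast
    have "a \<in> V3.span C"
      using ab BA(3) V3.span_mono[of BA C] unfolding C_def graded_part_def by blast
    moreover have "b * uu \<in> V3.span C"
    proof (cases "3 \<le> d")
      case True
      then have "b \<in> V3.span BB" using ab BB_def B0(3) by (auto simp: graded_part_def)
      then have "mu b \<in> mu ` V3.span BB" by blast
      then have "b * uu \<in> V3.span (mu ` BB)" using L.span_image by (simp add: mu_def)
      then show ?thesis using V3.span_mono[of "mu ` BB" C] unfolding C_def by blast
    next
      case False
      then show ?thesis using ab V3.span_zero by auto
    qed
    ultimately show "f \<in> V3.span C" using ab(6) V3.span_add by simp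
  qed
  have "V3.dim (graded_part Inv d) = card C"
    by (rule V3.dim_unique[OF CI IC indC refl])
  then show ?thesis unfolding Inv_def cardC BA(4) BB(4) by simp
qed

lemma cube_geom_summable:
  fixes t :: real
  assumes t: "0 \<le> t" "t < 1"
  shows "summable (\<lambda>n. (real n + 1) ^ 3 * t ^ n)"
proof -
  define r0 where "r0 = (1 + t) / 2"
  have r0: "t < r0" "r0 < 1" "0 < r0" using t by (auto simp: r0_def)
  define s where "s = root 3 r0"
  have s: "0 \<le> s" "s < 1" "s ^ 3 = r0" using r0 by (auto simp: s_def)
  have "(\<lambda>n. real n * s ^ n + s ^ n) \<longlonglongrightarrow> 0 + 0"
    using s by (intro tendsto_add powser_times_n_limit_0 LIMSEQ_power_zero) auto
  then have "(\<lambda>n. (real n * s ^ n + s ^ n) ^ 3) \<longlonglongrightarrow> (0 + 0) ^ 3"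
    by (rule tendsto_power)
  moreover have "(real n * s ^ n + s ^ n) ^ 3 = (real n + 1) ^ 3 * r0 ^ n" for n
  proof -
    have "(real n * s ^ n + s ^ n) ^ 3 = ((real n + 1) * s ^ n) ^ 3" by (simp add: algebra_simps)
    also have "\<dots> = (real n + 1) ^ 3 * (s ^ n) ^ 3" by (rule power_mult_distrib)
    also have "(s ^ n) ^ 3 = (s ^ 3) ^ n" by (simp add: power_mult[symmetric] mult.commute)
    finally have "(real n * s ^ n + s ^ n) ^ 3 = (real n + 1) ^ 3 * (s ^ 3) ^ n" .
    then show ?thesis using s by simp
  qed
  ultimately have "(\<lambda>n. (real n + 1) ^ 3 * r0 ^ n) \<longlonglongrightarrow> 0" by simp
  then have "Bseq (\<lambda>n. (real n + 1) ^ 3 * r0 ^ n)" by (rule convergent_imp_Bseq[OF convergentI])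
  then obtain K where K: "\<And>n. norm ((real n + 1) ^ 3 * r0 ^ n) \<le> K" by (auto simp: Bseq_def)
  have "summable (\<lambda>n. norm ((real n + 1) ^ 3) * t ^ n)"
  proof (rule Abel_lemma[OF t(1) r0(1)])
    fix n show "norm ((real n + 1) ^ 3) * r0 ^ n \<le> K"
      using K[of n] r0 by (simp add: abs_mult)
  qed
  then show ?thesis by simp
qed

lemma hilbert_analysis:
  fixes a :: "nat \<Rightarrow> real" and HA HI :: "real \<Rightarrow> real"
  assumes nonneg: "\<And>d. 0 \<le> a d" and bound: "\<And>d. a d \<le> (real d + 1) ^ 3" and pos: "0 < a 0"
    and HA: "\<And>t. HA t = (\<Sum>d. a d * t ^ d)"
    and HI: "\<And>t. HI t = (\<Sum>d. (a d + (if 3 \<le> d then a (d - 3) else 0)) * t ^ d)"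
  shows "Lim (at_left 1) (\<lambda>t. HI t / HA t) = 2"
    and "Lim (at_left 1) (\<lambda>t. (HI t / HA t - 2) / (t - 1)) = 3"
proof -
  have key: "HI t / HA t = 1 + t ^ 3" if t: "0 < t" "t < 1" for t
  proof -
    have sa: "summable (\<lambda>d. a d * t ^ d)"
    proof (rule summable_comparison_test'[OF cube_geom_summable[of t]])
      fix d show "norm (a d * t ^ d) \<le> (real d + 1) ^ 3 * t ^ d"
        using nonneg[of d] bound[of d] t by (simp add: abs_mult mult_right_mono)
    qed (use t in auto)
    have hpos: "0 < (\<Sum>d. a d * t ^ d)"
      by (rule suminf_pos2[OF sa, of 0]) (use nonneg t pos in auto)
    define g where "g d = (if 3 \<le> d then a (d - 3) else 0) * t ^ d" for d
    have "(\<lambda>i. g (i + 3)) sums (t ^ 3 * (\<Sum>d. a d * t ^ d))"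
    proof -
      have "(\<lambda>d. t ^ 3 * (a d * t ^ d)) sums (t ^ 3 * (\<Sum>d. a d * t ^ d))"
        by (rule sums_mult[OF summable_sums[OF sa]])
      moreover have "g (i + 3) = t ^ 3 * (a i * t ^ i)" for i
        by (simp add: g_def power_add algebra_simps)
      ultimately show ?thesis by simp
    qed
    then have gs: "g sums (t ^ 3 * (\<Sum>d. a d * t ^ d))"
      by (subst (asm) sums_zero_iff_shift) (auto simp: g_def)
    have "(\<lambda>d. a d * t ^ d + g d) sums ((\<Sum>d. a d * t ^ d) + t ^ 3 * (\<Sum>d. a d * t ^ d))"
      by (rule sums_add[OF summable_sums[OF sa] gs])
    moreover have "(\<lambda>d. a d * t ^ d + g d) = (\<lambda>d. (a d + (if 3 \<le> d then a (d - 3) else 0)) * t ^ d)"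
      by (auto simp: g_def algebra_simps)
    ultimately have "HI t = (1 + t ^ 3) * HA t" unfolding HI HA by (simp add: sums_iff algebra_simps)
    then show ?thesis using hpos HA[of t] by simp
  qed
  have ev: "eventually (\<lambda>t. t \<in> {0<..<1}) (at_left (1::real))" by (rule eventually_at_left_real) simp
  have ev1: "eventually (\<lambda>t. HI t / HA t = 1 + t ^ 3) (at_left (1::real))"
    using ev by eventually_elim (use key in auto)
  have "((\<lambda>t. 1 + t ^ 3) \<longlongrightarrow> 1 + 1 ^ 3) (at_left (1::real))" by (intro tendsto_intros)
  then have "((\<lambda>t. HI t / HA t) \<longlongrightarrow> 2) (at_left (1::real))"
    using tendsto_cong[OF ev1] by simp
  then show "Lim (at_left 1) (\<lambda>t. HI t / HA t) = 2" by (rule tendsto_Lim[rotated]) simp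
  have ev2: "eventually (\<lambda>t. (HI t / HA t - 2) / (t - 1) = t ^ 2 + t + 1) (at_left (1::real))"
    using ev
  proof eventually_elim
    case (elim t)
    then have "t - 1 \<noteq> 0" by simp
    moreover have "1 + t ^ 3 - 2 = (t ^ 2 + t + 1) * (t - 1)" by (simp add: algebra_simps power2_eq_square power3_eq_cube)
    ultimately show ?case using key[of t] elim by simp
  qed
  have "((\<lambda>t. t ^ 2 + t + 1) \<longlongrightarrow> 1 ^ 2 + 1 + 1) (at_left (1::real))" by (intro tendsto_intros)
  then have "((\<lambda>t. (HI t / HA t - 2) / (t - 1)) \<longlongrightarrow> 3) (at_left (1::real))"
    using tendsto_cong[OF ev2] by simp
  then show "Lim (at_left 1) (\<lambda>t. (HI t / HA t - 2) / (t - 1)) = 3" by (rule tendsto_Lim[rotated]) simp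
qed


lemma dim_A0_pos: "0 < V3.dim (graded_part (AA :: 'k::field mpoly3 set) 0)"
proof (rule ccontr)
  assume "\<not> 0 < V3.dim (graded_part (AA :: 'k mpoly3 set) 0)"
  then have d0: "V3.dim (graded_part (AA :: 'k mpoly3 set) 0) = 0" by simp
  obtain B where B: "B \<subseteq> graded_part (AA :: 'k mpoly3 set) 0" "V3.independent B"
      "graded_part AA 0 \<subseteq> V3.span B" "card B = V3.dim (graded_part (AA :: 'k mpoly3 set) 0)" "finite B"
    using graded_basis by blast
  then have "B = {}" using d0 by simp
  moreover have "(1 :: 'k mpoly3) \<in> graded_part AA 0"
    using AA_const3[of 1] homogeneous_const3[of "1::'k"] by (simp add: graded_part_def const3_1)
  ultimately have "(1 :: 'k mpoly3) \<in> V3.span {}" using B(3) by auto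
  then show False by simp
qed

theorem mainTheorem13:
  fixes dummy :: "'k::field itself"
  assumes "CHAR('k) = 2"
  defines "A \<equiv> gen_alg (NG_x1 :: 'k mpoly3) NGH_x2 X3"
  shows "invariants = {a + b * u_elem | a b. a \<in> A \<and> b \<in> A}
     \<and> (\<forall>a\<in>A. \<forall>b\<in>A. a + b * u_elem = 0 \<longrightarrow> a = 0 \<and> b = 0)
     \<and> r_inv (invariants :: 'k mpoly3 set) A = 2
     \<and> s_inv (invariants :: 'k mpoly3 set) A = 3"
proof -
  have two: "(2::'k) = 0" using of_nat_CHAR[where 'a='k] assms(1) by simp
  have A: "A = AA" unfolding A_def AA_def by (rule gen_alg_eq[OF two])
  have I: "(invariants :: 'k mpoly3 set) = {f. sig f = f}" by (rule invariants_eq)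
  have P1: "(invariants :: 'k mpoly3 set) = {a + b * u_elem | a b. a \<in> A \<and> b \<in> A}"
  proof
    show "(invariants :: 'k mpoly3 set) \<subseteq> {a + b * u_elem | a b. a \<in> A \<and> b \<in> A}"
    proof
      fix f :: "'k mpoly3" assume "f \<in> invariants"
      then have "sig f = f" unfolding I by simp
      then obtain P1 P2 where "f = EA P1 + EA P2 * uu" using inv_struct[OF two] by blast
      then show "f \<in> {a + b * u_elem | a b. a \<in> A \<and> b \<in> A}"
        unfolding A AA_def u_elem_eq by blast
    qed
    show "{a + b * u_elem | a b. a \<in> A \<and> b \<in> A} \<subseteq> (invariants :: 'k mpoly3 set)"
    proof
      fix f :: "'k mpoly3" assume "f \<in> {a + b * u_elem | a b. a \<in> A \<and> b \<in> A}"
      then obtain P1 P2 where "f = EA P1 + EA P2 * uu" unfolding A AA_def u_elem_eq by blast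
      then show "f \<in> invariants" unfolding I using sig_EA[OF two] sig_uu[OF two] by simp
    qed
  qed
  have P2: "\<forall>a\<in>A. \<forall>b\<in>A. a + b * u_elem = 0 \<longrightarrow> a = 0 \<and> b = 0"
    unfolding A u_elem_eq using free_AA by blast
  define a where "a d = real (V3.dim (graded_part (AA :: 'k mpoly3 set) d))" for d
  have HA: "hilbert A t = (\<Sum>d. a d * t ^ d)" for t unfolding hilbert_def A a_def by simp
  have HI: "hilbert (invariants :: 'k mpoly3 set) t = (\<Sum>d. (a d + (if 3 \<le> d then a (d - 3) else 0)) * t ^ d)" for t
    unfolding hilbert_def I dim_I[OF two] a_def by (rule arg_cong[where f=suminf]) (auto simp: fun_eq_iff)
  have nonneg: "0 \<le> a d" for d by (simp add: a_def)
  have bound: "a d \<le> (real d + 1) ^ 3" for d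
  proof -
    have "V3.dim (graded_part (AA :: 'k mpoly3 set) d) \<le> (d + 1) ^ 3" by (rule dim_graded_le)
    then have "real (V3.dim (graded_part (AA :: 'k mpoly3 set) d)) \<le> real ((d + 1) ^ 3)" by (rule of_nat_mono)
    then show ?thesis by (simp add: a_def add.commute)
  qed
  have pos: "0 < a 0" using dim_A0_pos by (simp add: a_def)
  note H = hilbert_analysis[OF nonneg bound pos HA HI]
  have r: "r_inv (invariants :: 'k mpoly3 set) A = 2" unfolding r_inv_def by (rule H(1))
  have s: "s_inv (invariants :: 'k mpoly3 set) A = 3" unfolding s_inv_def r by (rule H(2))
  show ?thesis using P1 P2 r s by blast
qed

end
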